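(* For $n\ge1$ let \[ \mathbf{M}_n=\begin{bmatrix} \frac{n}{2(2n+1)} & -\frac{3}{2n(2n+1)} & 0 & \frac{3}{2n^{5}}-\frac{9H_{n-1}^{(4)}}{2n}\\ 0 & \frac{n}{2(2n+1)} & -\frac{3}{2n(2n+1)} & \frac{3}{2n^{3}}\\ 0 & 0 & \frac{n}{2(2n+1)} & \frac{3}{2n}\\ 0 & 0 & 0 & 1 \end{bmatrix}. \] Then $\lim_{N\to\infty}\mathbf{M}_1\mathbf{M}_2\cdots\mathbf{M}_N$ exists and equals \[ \begin{bmatrix}0&0&0&\zeta(6)\\0&0&0&\zeta(4)\\0&0&0&\zeta(2)\\0&0&0&1\end{bmatrix}. \]
   Context: $\zeta$ denotes the Riemann zeta function. For integers $n\ge0$ and $p\ge1$, the hyper-harmonic number is $H_n^{(p)}=\sum_{k=1}^{n}k^{-p}$ (so $H_0^{(p)}=0$). *)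

theory Defs
  imports "HOL-Analysis.Analysis"
begin

definition zeta :: "real \<Rightarrow> real" where
  "zeta s = (\<Sum>n. 1 / (real (Suc n)) powr s)"

definition hharm :: "nat \<Rightarrow> nat \<Rightarrow> real" where
  "hharm p n = (\<Sum>k=1..n. 1 / (real k) ^ p)"

text \<open>Index of an element of type 4, positions 1,2,3,4 mapped to list positions 0..3
  (note: in type 4 the numeral 4 equals 0).\<close>
definition pos4 :: "4 \<Rightarrow> nat" where
  "pos4 i = (if i = 1 then 0 else if i = 2 then 1 else if i = 3 then 2 else 3)"

definition mat4 :: "real list list \<Rightarrow> real^4^4" where
  "mat4 xss = (\<chi> i j. xss ! pos4 i ! pos4 j)"

definition Mn :: "nat \<Rightarrow> real^4^4" where
  "Mn n = (let a = real n / (2 * (2 * real n + 1));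
               b = - 3 / (2 * real n * (2 * real n + 1)) in
    mat4 [[a, b, 0, 3 / (2 * real n ^ 5) - 9 * hharm 4 (n - 1) / (2 * real n)],
          [0, a, b, 3 / (2 * real n ^ 3)],
          [0, 0, a, 3 / (2 * real n)],
          [0, 0, 0, 1]])"

fun Mprod :: "nat \<Rightarrow> real^4^4" where
  "Mprod 0 = mat 1"
| "Mprod (Suc N) = Mprod N ** Mn (Suc N)"

end

theory Submission
  imports Defs "HOL-Real_Asymp.Real_Asymp"
begin

datatype tr = T (c0: real) (c1: real) (c2: real)

instantiation tr :: comm_ring_1
begin
definition "zero_tr = T 0 0 0"
definition "one_tr = T 1 0 0"
definition "plus_tr f g = T (c0 f + c0 g) (c1 f + c1 g) (c2 f + c2 g)"
definition "minus_tr f g = T (c0 f - c0 g) (c1 f - c1 g) (c2 f - c2 g)"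
definition "uminus_tr f = T (- c0 f) (- c1 f) (- c2 f)"
definition "times_tr f g = T (c0 f * c0 g) (c0 f * c1 g + c1 f * c0 g)
   (c0 f * c2 g + c1 f * c1 g + c2 f * c0 g)"
instance
  by standard (auto simp: zero_tr_def one_tr_def plus_tr_def minus_tr_def uminus_tr_def
      times_tr_def algebra_simps tr.expand)
end

lemma tr_simps [simp]:
  "c0 0 = 0" "c1 0 = 0" "c2 0 = 0" "c0 1 = 1" "c1 1 = 0" "c2 1 = 0"
  "c0 (f + g) = c0 f + c0 g" "c1 (f + g) = c1 f + c1 g" "c2 (f + g) = c2 f + c2 g"
  "c0 (f - g) = c0 f - c0 g" "c1 (f - g) = c1 f - c1 g" "c2 (f - g) = c2 f - c2 g"
  "c0 (- f) = - c0 f" "c1 (- f) = - c1 f" "c2 (- f) = - c2 f"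
  "c0 (f * g) = c0 f * c0 g" "c1 (f * g) = c0 f * c1 g + c1 f * c0 g"
  "c2 (f * g) = c0 f * c2 g + c1 f * c1 g + c2 f * c0 g"
  by (simp_all add: zero_tr_def one_tr_def plus_tr_def minus_tr_def uminus_tr_def times_tr_def)

lemma tr_eqI: "c0 f = c0 g \<Longrightarrow> c1 f = c1 g \<Longrightarrow> c2 f = c2 g \<Longrightarrow> f = g"
  by (simp add: tr.expand)

lemma c_sum [simp]:
  "c0 (sum f S) = (\<Sum>x\<in>S. c0 (f x))" "c1 (sum f S) = (\<Sum>x\<in>S. c1 (f x))"
  "c2 (sum f S) = (\<Sum>x\<in>S. c2 (f x))"
  by (induction S rule: infinite_finite_induct, auto)+

definition tc :: "real \<Rightarrow> tr" where "tc r = T r 0 0"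
definition Xt :: tr where "Xt = T 0 1 0"
lemma tc_simps [simp]: "c0 (tc r) = r" "c1 (tc r) = 0" "c2 (tc r) = 0"
  "c0 Xt = 0" "c1 Xt = 1" "c2 Xt = 0"
  by (simp_all add: tc_def Xt_def)

lemma tc_mult: "tc (a * b) = tc a * tc b" by (rule tr_eqI) auto
lemma tc_one: "tc 1 = 1" by (rule tr_eqI) auto
lemma tc_prod: "tc (prod f S) = (\<Prod>x\<in>S. tc (f x))"
  by (induction S rule: infinite_finite_induct, auto simp: tc_one tc_mult)

definition tmat :: "tr \<Rightarrow> tr \<Rightarrow> real^4^4" where
  "tmat q w = mat4 [[c0 q, c1 q, c2 q, c2 w],[0, c0 q, c1 q, c1 w],[0,0,c0 q, c0 w],[0,0,0,1]]"

lemma pos4_simps: "pos4 1 = 0" "pos4 2 = 1" "pos4 3 = 2" "pos4 4 = 3"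
  by (simp_all add: pos4_def)

lemma tmat_mult: "tmat q w ** tmat q' w' = tmat (q * q') (w + q * w')"
  unfolding tmat_def mat4_def matrix_matrix_mult_def
  by (simp add: vec_eq_iff sum_4 forall_4 pos4_simps)

lemma tmat_one: "mat 1 = tmat 1 0"
  unfolding tmat_def mat4_def mat_def
  by (simp add: vec_eq_iff forall_4 pos4_simps)


definition aa :: "nat \<Rightarrow> real" where "aa n = real n / (2 * (2 * real n + 1))"
definition bb :: "nat \<Rightarrow> real" where "bb n = - 3 / (2 * real n * (2 * real n + 1))"
definition Ar :: "nat \<Rightarrow> tr" where "Ar n = T (aa n) (bb n) 0"
definition Vr :: "nat \<Rightarrow> tr" where
  "Vr n = T (3 / (2 * real n)) (3 / (2 * real n ^ 3)) (3 / (2 * real n ^ 5) - 9 * hharm 4 (n - 1) / (2 * real n))"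
definition Qr :: "nat \<Rightarrow> tr" where "Qr N = (\<Prod>m\<in>{1..N}. Ar m)"
definition Wr :: "nat \<Rightarrow> tr" where "Wr N = (\<Sum>n\<in>{1..N}. Qr (n - 1) * Vr n)"

lemma Mn_tmat: "Mn n = tmat (Ar n) (Vr n)"
  unfolding Mn_def tmat_def Ar_def Vr_def aa_def bb_def Let_def by simp

lemma Mprod_tmat: "Mprod N = tmat (Qr N) (Wr N)"
proof (induction N)
  case 0
  then show ?case by (simp add: Qr_def Wr_def tmat_one)
next
  case (Suc N)
  then show ?case
    by (simp add: Mn_tmat tmat_mult Qr_def Wr_def prod.cl_ivl_Suc sum.cl_ivl_Suc)
qed

lemma tmat_tendsto:
  assumes "(\<lambda>N. c0 (q N)) \<longlonglongrightarrow> c0 q'" "(\<lambda>N. c1 (q N)) \<longlonglongrightarrow> c1 q'" "(\<lambda>N. c2 (q N)) \<longlonglongrightarrow> c2 q'"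
    "(\<lambda>N. c0 (w N)) \<longlonglongrightarrow> c0 w'" "(\<lambda>N. c1 (w N)) \<longlonglongrightarrow> c1 w'" "(\<lambda>N. c2 (w N)) \<longlonglongrightarrow> c2 w'"
  shows "(\<lambda>N. tmat (q N) (w N)) \<longlonglongrightarrow> tmat q' w'"
  unfolding tmat_def mat4_def
proof (intro tendsto_vec_lambda)
  fix i j :: 4
  show "(\<lambda>N. [[c0 (q N), c1 (q N), c2 (q N), c2 (w N)], [0, c0 (q N), c1 (q N), c1 (w N)],
            [0, 0, c0 (q N), c0 (w N)], [0, 0, 0, 1]] ! pos4 i ! pos4 j) \<longlonglongrightarrow>
        [[c0 q', c1 q', c2 q', c2 w'], [0, c0 q', c1 q', c1 w'], [0, 0, c0 q', c0 w'], [0, 0, 0, 1]] !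
        pos4 i ! pos4 j"
    using exhaust_4[of i] exhaust_4[of j] assms
    by (auto simp: pos4_simps)
qed

definition E :: "real \<Rightarrow> tr" where "E d = T (1/d^2) (1/d^4) (1/d^6)"

lemma E_inv: "d \<noteq> 0 \<Longrightarrow> E d * (tc (d^2) - Xt) = 1"
  by (rule tr_eqI) (simp_all add: E_def field_simps)

lemma wz_core:
  fixes x y c :: real
  assumes "x \<ge> 1" "y \<ge> 1"
  defines "gf \<equiv> \<lambda>k. - (2*k + 3*x - 2) / (2 * (2*x - 1))"
  shows "tc c - tc (c * x / (2*(2*x-1))) * (tc (x^2) - tc 4 * Xt) * E (y + x)
     - tc (gf (y+1) * c) * E (y + x) * (tc (y^2) - Xt) + tc (gf y * c) = 0"
    (is "?Z = 0")
proof -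
  have h: "y + x \<noteq> 0" "2*x - 1 \<noteq> 0" "2*(2*x - 1) \<noteq> 0" using assms by auto
  let ?D = "tc ((y+x)^2) - Xt"
  have ED: "E (y + x) * ?D = 1" using h by (simp add: E_inv)
  have Z': "tc c * ?D - tc (c * x / (2*(2*x-1))) * (tc (x^2) - tc 4 * Xt)
     - tc (gf (y+1) * c) * (tc (y^2) - Xt) + tc (gf y * c) * ?D = 0"
    apply (rule tr_eqI)
    using h apply (simp_all add: gf_def diff_divide_distrib[symmetric] add_divide_distrib[symmetric] divide_simps)
    apply (simp_all add: algebra_simps power2_eq_square)
    done
  have "?Z * ?D = tc c * ?D - tc (c * x / (2*(2*x-1))) * (tc (x^2) - tc 4 * Xt) * (E (y + x) * ?D)
     - tc (gf (y+1) * c) * (E (y + x) * ?D) * (tc (y^2) - Xt) + tc (gf y * c) * ?D"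
    by (simp add: algebra_simps)
  also have "\<dots> = 0" using Z' ED by simp
  finally have "?Z * ?D = 0" .
  then have "?Z * (?D * E (y + x)) = 0" by (metis mult.assoc mult_zero_left)
  then show ?thesis using ED by (simp add: mult.commute)
qed


definition cen :: "nat \<Rightarrow> real" where "cen m = real ((2*m) choose m)"
definition cc :: "nat \<Rightarrow> real" where "cc n = 1 / cen (n - 1)"

lemma cen_pos: "cen m > 0" by (simp add: cen_def)

lemma cen_Suc_nat: "((2 * Suc m) choose Suc m) * (m + 1) = 2 * (2 * m + 1) * ((2*m) choose m)"
  by (smt (verit, best) Suc_eq_plus1 Suc_times_binomial_add
    Suc_times_binomial_eq add_Suc_right add_Suc_shift mult.commute
    mult.left_commute mult_2)

lemma cen_Suc: "cen (Suc m) * (real m + 1) = 2 * (2 * real m + 1) * cen m"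
proof -
  define p where "p = (2 * Suc m) choose Suc m"
  define q where "q = (2 * m) choose m"
  have e: "p * (m + 1) = 2 * (2 * m + 1) * q" unfolding p_def q_def by (rule cen_Suc_nat)
  have "real p * (real m + 1) = 2 * (2 * real m + 1) * real q"
    using arg_cong[OF e, of real] by (simp only: of_nat_mult of_nat_add of_nat_1 of_nat_numeral)
  then show ?thesis unfolding cen_def p_def q_def .
qed

lemma cc_Suc: "n \<ge> 1 \<Longrightarrow> cc (Suc n) = cc n * real n / (2 * (2 * real n - 1))"
proof -
  assume n: "n \<ge> 1"
  then obtain m where m: "n = Suc m" by (cases n) auto
  have e: "cen (Suc m) * (real m + 1) = 2 * (2 * real m + 1) * cen m" by (rule cen_Suc)
  have p: "cen m > 0" "cen (Suc m) > 0" "2 * real m + 1 > 0" "real m + 1 > 0" using cen_pos by auto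
  have "1 / cen (Suc m) = (real m + 1) / (2 * (2 * real m + 1) * cen m)"
    using p e by (simp add: divide_simps) (simp add: algebra_simps)
  moreover have "(1 / cen m) * real (Suc m) / (2 * (2 * real (Suc m) - 1)) = (real m + 1) / (2 * (2 * real m + 1) * cen m)"
    using p by (simp add: field_simps)
  ultimately show ?thesis using m by (simp add: cc_def)
qed

definition A :: "nat \<Rightarrow> tr" where "A n = (\<Prod>j\<in>{1..<n}. tc (real j ^ 2) - tc 4 * Xt)"
definition B :: "nat \<Rightarrow> nat \<Rightarrow> tr" where "B n k = (\<Prod>j\<in>{0..<n}. E (real (k + j)))"
definition F :: "nat \<Rightarrow> nat \<Rightarrow> tr" where "F n k = tc (cc n) * A n * B n k"
definition gf :: "nat \<Rightarrow> nat \<Rightarrow> real" where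
  "gf n k = - (2 * real k + 3 * real n - 2) / (2 * (2 * real n - 1))"
definition G :: "nat \<Rightarrow> nat \<Rightarrow> tr" where "G n k = tc (gf n k) * F n k"

lemma A_Suc: "n \<ge> 1 \<Longrightarrow> A (Suc n) = A n * (tc (real n ^ 2) - tc 4 * Xt)"
  by (simp add: A_def prod.atLeastLessThan_Suc)

lemma B_Suc: "B (Suc n) k = B n k * E (real (k + n))"
  by (simp add: B_def prod.atLeastLessThan_Suc)

lemma B_shift: "B n k * E (real (k + n)) = E (real k) * B n (Suc k)"
proof -
  have "B n k * E (real (k + n)) = (\<Prod>j<Suc n. E (real (k + j)))"
    by (simp add: B_def atLeast0LessThan)
  also have "\<dots> = E (real k) * B n (Suc k)"
    by (subst prod.lessThan_Suc_shift) (simp add: B_def atLeast0LessThan)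
  finally show ?thesis .
qed

lemma B_Suc_k: "k \<ge> 1 \<Longrightarrow> B n (Suc k) = B n k * E (real (k + n)) * (tc (real k ^ 2) - Xt)"
proof -
  assume "k \<ge> 1"
  then have "E (real k) * (tc (real k ^ 2) - Xt) = 1" by (intro E_inv) auto
  moreover have "B n k * E (real (k + n)) * (tc (real k ^ 2) - Xt) = B n (Suc k) * (E (real k) * (tc (real k ^ 2) - Xt))"
    by (simp only: B_shift mult_ac)
  ultimately show ?thesis by simp
qed

lemma tc_diff: "tc (a - b) = tc a - tc b" by (rule tr_eqI) auto
lemma tc_uminus: "tc (- a) = - tc a" by (rule tr_eqI) auto
lemma tc_add: "tc (a + b) = tc a + tc b" by (rule tr_eqI) auto

lemma WZ:
  assumes n: "n \<ge> 1" and k: "k \<ge> 1"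
  shows "F n k - F (Suc n) k = G n (Suc k) - G n k"
proof -
  have Z: "tc (cc n) - tc (cc n * real n / (2*(2*real n-1))) * (tc (real n^2) - tc 4 * Xt) * E (real k + real n)
     - tc (gf n (Suc k) * cc n) * E (real k + real n) * (tc (real k^2) - Xt) + tc (gf n k * cc n) = 0"
    using wz_core[of "real n" "real k" "cc n"] n k by (simp add: gf_def add_ac)
  have "G n (Suc k) - G n k - (F n k - F (Suc n) k) = - (A n * B n k) *
     (tc (cc n) - tc (cc n * real n / (2*(2*real n-1))) * (tc (real n^2) - tc 4 * Xt) * E (real k + real n)
     - tc (gf n (Suc k) * cc n) * E (real k + real n) * (tc (real k^2) - Xt) + tc (gf n k * cc n))"
    unfolding G_def F_def using n k
    by (simp add: B_Suc_k A_Suc B_Suc cc_Suc tc_mult algebra_simps)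
  then show ?thesis using Z by simp
qed

abbreviation H4 :: "nat \<Rightarrow> real" where "H4 n \<equiv> hharm 4 n"

definition Lp :: "nat \<Rightarrow> tr" where
  "Lp n = (\<Prod>m\<in>{1..<n}. (tc (real m ^ 2) - tc 4 * Xt) * E (real m))"
definition termL :: "nat \<Rightarrow> tr" where "termL n = tc (3 / cen n) * E (real n) * Lp n"
definition Rr :: "nat \<Rightarrow> tr" where "Rr n = (\<Prod>m\<in>{1..<n}. 1 - tc (3 / real m ^ 2) * Xt)"
definition Pp :: "nat \<Rightarrow> real" where "Pp n = (\<Prod>m\<in>{1..<n}. aa m)"

lemma cen_Suc': "n \<ge> 1 \<Longrightarrow> cen n * real n = 2 * (2 * real n - 1) * cen (n - 1)"
  using cen_Suc[of "n - 1"] by (cases n) (auto simp: algebra_simps)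

lemma G1: assumes n: "n \<ge> 1" shows "- G n 1 = termL n"
proof -
  have B1: "B n 1 = E (real n) * (\<Prod>m\<in>{1..<n}. E (real m))"
  proof -
    have "B n 1 = (\<Prod>m\<in>{1..n}. E (real m))"
      unfolding B_def by (rule prod.reindex_bij_witness[where i="\<lambda>m. m - 1" and j="\<lambda>j. j + 1"]) auto
    also have "\<dots> = E (real n) * (\<Prod>m\<in>{1..<n}. E (real m))"
      using n by (simp add: atLeastLessThanSuc_atLeastAtMost[symmetric] prod.atLeastLessThan_Suc mult.commute
          del: atLeastLessThanSuc_atLeastAtMost)
    finally show ?thesis .
  qed
  have L: "Lp n = A n * (\<Prod>m\<in>{1..<n}. E (real m))"
    unfolding Lp_def A_def by (simp add: prod.distrib)
  have c: "- (gf n 1 * cc n) = 3 / cen n"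
    using cen_Suc'[OF n] cen_pos[of n] cen_pos[of "n - 1"] n
    by (simp add: gf_def cc_def field_simps)
  have "- G n 1 = tc (- (gf n 1 * cc n)) * E (real n) * Lp n"
    unfolding G_def F_def B1 L by (simp add: tc_mult tc_uminus algebra_simps)
  then show ?thesis unfolding termL_def c .
qed


lemma Pp_formula: "n \<ge> 1 \<Longrightarrow> Pp n = 2 / (real n * cen n)"
proof (induction n rule: dec_induct)
  case base
  then show ?case by (simp add: Pp_def cen_def)
next
  case (step n)
  have e: "cen (Suc n) * (real n + 1) = 2 * (2 * real n + 1) * cen n" by (rule cen_Suc)
  have p: "cen n > 0" "cen (Suc n) > 0" "real n > 0" using cen_pos step(1) by auto
  have "Pp (Suc n) = Pp n * aa n" using step(1) by (simp add: Pp_def prod.atLeastLessThan_Suc)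
  also have "\<dots> = 2 / (real n * cen n) * (real n / (2 * (2 * real n + 1)))"
    by (simp add: step.IH aa_def)
  also have "\<dots> = 2 / (real (Suc n) * cen (Suc n))"
    using p e by (simp add: divide_simps) (simp add: algebra_simps)
  finally show ?case .
qed

lemma Ar_split: "m \<ge> 1 \<Longrightarrow> Ar m = tc (aa m) * (1 - tc (3 / real m ^ 2) * Xt)"
  by (rule tr_eqI) (simp_all add: Ar_def aa_def bb_def field_simps power2_eq_square)

lemma Qr_split: "n \<ge> 1 \<Longrightarrow> Qr (n - 1) = tc (Pp n) * Rr n"
proof -
  assume n: "n \<ge> 1"
  have "{1..n - 1} = {1..<n}" using n by auto
  then have "Qr (n - 1) = (\<Prod>m\<in>{1..<n}. tc (aa m) * (1 - tc (3 / real m ^ 2) * Xt))"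
    unfolding Qr_def by (intro prod.cong) (auto simp: Ar_split)
  then show ?thesis by (simp add: prod.distrib Pp_def Rr_def tc_prod)
qed

lemma hharm_Suc: "hharm p (Suc n) = hharm p n + 1 / real (Suc n) ^ p"
  by (simp add: hharm_def)

lemma Lp_Rr: "n \<ge> 1 \<Longrightarrow> Lp n = Rr n * (1 - tc (3 * H4 (n - 1)) * (Xt * Xt))"
proof (induction n rule: dec_induct)
  case base
  then show ?case by (simp add: Lp_def Rr_def hharm_def tc_def zero_tr_def[symmetric] one_tr_def[symmetric])
next
  case (step n)
  have nz: "real n \<noteq> 0" using step(1) by auto
  have key: "(1 - tc (3 * H4 (n - 1)) * (Xt * Xt)) * ((tc (real n ^ 2) - tc 4 * Xt) * E (real n))
     = (1 - tc (3 / real n ^ 2) * Xt) * (1 - tc (3 * H4 n) * (Xt * Xt))"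
  proof -
    have h: "H4 n = H4 (n - 1) + 1 / real n ^ 4"
      using step(1) hharm_Suc[of 4 "n - 1"] by simp
    show ?thesis
      by (rule tr_eqI) (use nz in \<open>simp_all add: E_def h field_simps\<close>)
  qed
  have "Lp (Suc n) = Lp n * ((tc (real n ^ 2) - tc 4 * Xt) * E (real n))"
    using step(1) by (simp add: Lp_def prod.atLeastLessThan_Suc)
  also have "\<dots> = Rr n * ((1 - tc (3 / real n ^ 2) * Xt) * (1 - tc (3 * H4 n) * (Xt * Xt)))"
    by (simp only: step.IH mult.assoc key)
  also have "\<dots> = Rr (Suc n) * (1 - tc (3 * H4 (Suc n - 1)) * (Xt * Xt))"
    using step(1) by (simp add: Rr_def prod.atLeastLessThan_Suc mult_ac)
  finally show ?case .
qed

lemma Vr_split: "n \<ge> 1 \<Longrightarrow> Vr n = tc (3 / (2 * real n)) * (tc (real n ^ 2) * E (real n) - tc (3 * H4 (n - 1)) * (Xt * Xt))"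
  by (rule tr_eqI) (simp_all add: Vr_def E_def field_simps eval_nat_numeral)

lemma QV_termL: assumes n: "n \<ge> 1" shows "Qr (n - 1) * Vr n = termL n"
proof -
  have nz: "real n \<noteq> 0" using n by auto
  have c: "cen n > 0" by (rule cen_pos)
  have "tc (Pp n) * tc (3 / (2 * real n)) * (tc (real n ^ 2) * E (real n) - tc (3 * H4 (n - 1)) * (Xt * Xt))
     = tc (3 / cen n) * E (real n) * (1 - tc (3 * H4 (n - 1)) * (Xt * Xt))"
    by (rule tr_eqI) (use nz c in \<open>simp_all add: Pp_formula[OF n] E_def field_simps eval_nat_numeral\<close>)
  then show ?thesis
    unfolding Qr_split[OF n] Vr_split[OF n] termL_def Lp_Rr[OF n]
    by (simp add: mult_ac)
qed

lemma Wr_termL: "Wr N = (\<Sum>j<N. termL (Suc j))"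
proof -
  have "Wr N = (\<Sum>n\<in>{1..N}. termL n)" unfolding Wr_def by (intro sum.cong refl) (metis QV_termL atLeastAtMost_iff)
  also have "\<dots> = (\<Sum>j<N. termL (Suc j))"
    by (rule sum.reindex_bij_witness[where i=Suc and j="\<lambda>n. n - 1"]) auto
  finally show ?thesis .
qed

definition SF :: "nat \<Rightarrow> nat \<Rightarrow> tr" where "SF n K = (\<Sum>t<K. F n (Suc t))"

lemma tele_k: "n \<ge> 1 \<Longrightarrow> SF n K - SF (Suc n) K = G n (Suc K) - G n 1"
proof -
  assume n: "n \<ge> 1"
  have "SF n K - SF (Suc n) K = (\<Sum>t<K. F n (Suc t) - F (Suc n) (Suc t))"
    by (simp add: SF_def sum_subtractf)
  also have "\<dots> = (\<Sum>t<K. G n (Suc (Suc t)) - G n (Suc t))"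
    using n by (intro sum.cong) (auto simp: WZ)
  also have "\<dots> = G n (Suc K) - G n 1"
    by (subst sum_lessThan_telescope[where f="\<lambda>t. G n (Suc t)"]) simp
  finally show ?thesis .
qed

lemma main_identity:
  "SF 1 K - SF (Suc N) K = (\<Sum>j<N. G (Suc j) (Suc K)) + Wr N"
proof -
  have "SF 1 K - SF (Suc N) K = (\<Sum>j<N. SF (Suc j) K - SF (Suc (Suc j)) K)"
    by (subst sum_lessThan_telescope'[where f="\<lambda>j. SF (Suc j) K"]) simp
  also have "\<dots> = (\<Sum>j<N. G (Suc j) (Suc K) + termL (Suc j))"
    by (intro sum.cong refl) (simp add: tele_k G1[symmetric])
  also have "\<dots> = (\<Sum>j<N. G (Suc j) (Suc K)) + Wr N"
    by (simp add: sum.distrib Wr_termL)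
  finally show ?thesis .
qed

definition cp :: "nat \<Rightarrow> tr \<Rightarrow> real" where
  "cp i f = (if i = 0 then c0 f else if i = 1 then c1 f else c2 f)"

lemma cp_diff: "cp i (f - g) = cp i f - cp i g" by (simp add: cp_def)
lemma cp_add: "cp i (f + g) = cp i f + cp i g" by (simp add: cp_def)
lemma cp_sum: "cp i (sum f S) = (\<Sum>x\<in>S. cp i (f x))" by (simp add: cp_def)
lemma cp_tc: "cp i (tc r * f) = r * cp i f" by (simp add: cp_def)

definition maj :: "tr \<Rightarrow> tr \<Rightarrow> bool" where
  "maj f g \<longleftrightarrow> \<bar>c0 f\<bar> \<le> c0 g \<and> \<bar>c1 f\<bar> \<le> c1 g \<and> \<bar>c2 f\<bar> \<le> c2 g"

lemma abs_mult_le: "\<bar>a\<bar> \<le> (u::real) \<Longrightarrow> \<bar>b\<bar> \<le> v \<Longrightarrow> \<bar>a * b\<bar> \<le> u * v"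
  by (simp add: abs_mult mult_mono')

lemma maj_mult: assumes "maj f g" "maj f' g'" shows "maj (f * f') (g * g')"
proof -
  have h: "\<bar>c0 f\<bar> \<le> c0 g" "\<bar>c1 f\<bar> \<le> c1 g" "\<bar>c2 f\<bar> \<le> c2 g"
    "\<bar>c0 f'\<bar> \<le> c0 g'" "\<bar>c1 f'\<bar> \<le> c1 g'" "\<bar>c2 f'\<bar> \<le> c2 g'"
    using assms by (auto simp: maj_def)
  have p: "\<bar>c0 f * c0 f'\<bar> \<le> c0 g * c0 g'" "\<bar>c0 f * c1 f'\<bar> \<le> c0 g * c1 g'"
     "\<bar>c1 f * c0 f'\<bar> \<le> c1 g * c0 g'" "\<bar>c0 f * c2 f'\<bar> \<le> c0 g * c2 g'"
     "\<bar>c1 f * c1 f'\<bar> \<le> c1 g * c1 g'" "\<bar>c2 f * c0 f'\<bar> \<le> c2 g * c0 g'"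
    using h by (auto intro!: abs_mult_le)
  show ?thesis unfolding maj_def using p
    by (auto simp: abs_triangle_ineq[THEN order_trans] intro: order_trans[OF abs_triangle_ineq] add_mono)
qed

lemma maj_one: "maj 1 1" by (simp add: maj_def)

lemma maj_prod: "(\<And>x. x \<in> S \<Longrightarrow> maj (f x) (g x)) \<Longrightarrow> maj (prod f S) (prod g S)"
proof (induction S rule: infinite_finite_induct)
  case (insert x F)
  then show ?case by (simp add: maj_mult)
qed (simp_all add: maj_one)

definition Geo :: tr where "Geo = T 1 1 1"

lemma Geo_pow: "Geo ^ m = T 1 (real m) (real m * (real m + 1) / 2)"
proof (induction m)
  case 0
  then show ?case by (simp add: one_tr_def)
next
  case (Suc m)
  show ?case unfolding power_Suc Suc by (rule tr_eqI) (simp_all add: Geo_def field_simps)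
qed

lemma maj_bound:
  assumes "maj f (tc s * Geo ^ m)" "i < 3" "s \<ge> 0"
  shows "\<bar>cp i f\<bar> \<le> s * (real m + 1)^2"
proof -
  have m: "real m \<le> (real m + 1)^2" "real m * (real m + 1) / 2 \<le> (real m + 1)^2" "1 \<le> (real m + 1)^2"
    by (simp_all add: power2_eq_square field_simps)
  have h: "\<bar>c0 f\<bar> \<le> s" "\<bar>c1 f\<bar> \<le> s * real m" "\<bar>c2 f\<bar> \<le> s * (real m * (real m + 1) / 2)"
    using assms(1) by (auto simp: maj_def Geo_pow)
  have "s * 1 \<le> s * (real m + 1)^2"
  proof (rule mult_left_mono[OF _ assms(3)])
    have "1 * 1 \<le> (real m + 1) * (real m + 1)" by (intro mult_mono) auto
    then show "1 \<le> (real m + 1)^2" by (simp add: power2_eq_square)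
  qed
  moreover have "s * real m \<le> s * (real m + 1)^2"
    "s * (real m * (real m + 1) / 2) \<le> s * (real m + 1)^2"
    using m assms(3) by (auto intro!: mult_left_mono simp del: times_divide_eq_right)
  moreover have "i = 0 \<or> i = 1 \<or> i = 2" using assms(2) by auto
  ultimately show ?thesis using h by (auto simp: cp_def simp del: times_divide_eq_right)
qed

lemma maj_lin: "j \<ge> 1 \<Longrightarrow> maj (tc (real j ^ 2) - tc 4 * Xt) (tc (real j ^ 2) * Geo ^ 4)"
proof -
  assume "j \<ge> 1"
  then have "real j ^ 2 \<ge> 1" by simp
  then show ?thesis by (simp add: maj_def Geo_pow)
qed

lemma maj_E: "d \<ge> 1 \<Longrightarrow> maj (E d) (tc (1 / d^2) * Geo)"
proof -
  assume d: "d \<ge> 1"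
  have "1 / d^4 \<le> 1 / d^2" "1 / d^6 \<le> 1 / d^2"
    using d by (auto intro!: divide_left_mono power_increasing)
  then show ?thesis by (simp add: maj_def E_def Geo_def)
qed

lemma maj_A: "maj (A n) (tc (\<Prod>j\<in>{1..<n}. real j ^ 2) * Geo ^ (4 * (n - 1)))"
proof -
  have "maj (A n) (\<Prod>j\<in>{1..<n}. tc (real j ^ 2) * Geo ^ 4)"
    unfolding A_def by (rule maj_prod) (auto intro: maj_lin)
  also have "(\<Prod>j\<in>{1..<n}. tc (real j ^ 2) * Geo ^ 4) = tc (\<Prod>j\<in>{1..<n}. real j ^ 2) * Geo ^ (4 * (n - 1))"
    by (simp add: prod.distrib tc_prod power_mult[symmetric] mult.commute)
  finally show ?thesis .
qed

lemma maj_B: "k \<ge> 1 \<Longrightarrow> maj (B n k) (tc (\<Prod>j\<in>{0..<n}. 1 / real (k + j) ^ 2) * Geo ^ n)"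
proof -
  assume k: "k \<ge> 1"
  have "maj (B n k) (\<Prod>j\<in>{0..<n}. tc (1 / real (k + j) ^ 2) * Geo)"
    unfolding B_def using k by (intro maj_prod maj_E) auto
  also have "(\<Prod>j\<in>{0..<n}. tc (1 / real (k + j) ^ 2) * Geo) = tc (\<Prod>j\<in>{0..<n}. 1 / real (k + j) ^ 2) * Geo ^ n"
    by (simp add: prod.distrib tc_prod)
  finally show ?thesis .
qed

lemma prodJK: assumes "n \<ge> 1" "k \<ge> 1"
  shows "(\<Prod>j\<in>{1..<n}. real j ^ 2) * (\<Prod>j\<in>{0..<n}. 1 / real (k + j) ^ 2) \<le> 1 / real k ^ 2"
proof -
  have "(\<Prod>j\<in>{0..<n}. 1 / real (k + j) ^ 2) = 1 / real k ^ 2 * (\<Prod>j\<in>{1..<n}. 1 / real (k + j) ^ 2)"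
    using assms by (subst prod.atLeast_Suc_lessThan) auto
  then have "(\<Prod>j\<in>{1..<n}. real j ^ 2) * (\<Prod>j\<in>{0..<n}. 1 / real (k + j) ^ 2)
      = 1 / real k ^ 2 * (\<Prod>j\<in>{1..<n}. (real j / real (k + j)) ^ 2)"
    by (simp add: prod.distrib[symmetric] power_divide)
  also have "\<dots> \<le> 1 / real k ^ 2 * 1"
    using assms by (intro mult_left_mono prod_le_1) (auto simp: power_le_one_iff divide_le_eq_1)
  finally show ?thesis by simp
qed

lemma cc_pos: "cc n > 0" by (simp add: cc_def cen_pos)

definition hb :: "nat \<Rightarrow> real" where "hb n = cc n * (5 * real n + 1)^2"

lemma Fbound: assumes "n \<ge> 1" "k \<ge> 1" "i < 3"
  shows "\<bar>cp i (F n k)\<bar> \<le> hb n / real k ^ 2"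
proof -
  let ?J = "\<Prod>j\<in>{1..<n}. real j ^ 2" and ?K = "\<Prod>j\<in>{0..<n}. 1 / real (k + j) ^ 2"
  have "maj (F n k) (tc (cc n) * (tc ?J * Geo ^ (4 * (n - 1))) * (tc ?K * Geo ^ n))"
    unfolding F_def using assms cc_pos[of n]
    by (intro maj_mult maj_A maj_B) (auto simp: maj_def)
  also have "tc (cc n) * (tc ?J * Geo ^ (4 * (n - 1))) * (tc ?K * Geo ^ n) = tc (cc n * ?J * ?K) * Geo ^ (4 * (n - 1) + n)"
    by (simp add: tc_mult power_add mult_ac)
  finally have m: "maj (F n k) (tc (cc n * ?J * ?K) * Geo ^ (4 * (n - 1) + n))" .
  have nn: "cc n * ?J * ?K \<ge> 0" using cc_pos[of n] by (auto intro!: prod_nonneg mult_nonneg_nonneg)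
  have "\<bar>cp i (F n k)\<bar> \<le> cc n * ?J * ?K * (real (4 * (n - 1) + n) + 1)^2"
    by (rule maj_bound[OF m assms(3) nn])
  also have "\<dots> \<le> cc n * (1 / real k ^ 2) * (5 * real n + 1)^2"
  proof (rule mult_mono)
    show "cc n * ?J * ?K \<le> cc n * (1 / real k ^ 2)"
      using mult_left_mono[OF prodJK[OF assms(1,2)] less_imp_le[OF cc_pos[of n]]] by (simp only: mult.assoc)
    show "(real (4 * (n - 1) + n) + 1)^2 \<le> (5 * real n + 1)^2"
      using assms(1) by (intro power_mono) (auto simp: of_nat_diff)
  qed (auto simp: less_imp_le[OF cc_pos])
  finally show ?thesis by (simp add: hb_def field_simps)
qed

lemma aa_bounds: "aa m \<ge> 0" "aa m \<le> 1/4"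
  by (auto simp: aa_def field_simps)

lemma bb_le: "m \<ge> 1 \<Longrightarrow> \<bar>bb m\<bar> \<le> aa m * 3"
proof -
  assume m: "m \<ge> 1"
  then have r: "real m \<ge> 1" by simp
  have "\<bar>bb m\<bar> = 3 / (2 * real m * (2 * real m + 1))" using r by (simp add: bb_def)
  also have "\<dots> \<le> 3 * real m / (2 * (2 * real m + 1))"
  proof -
    have "1 * 1 \<le> real m * real m" using r by (intro mult_mono) auto
    then have "1 / real m \<le> real m" using r by (simp add: divide_simps)
    then have "3 / (2 * (2 * real m + 1)) * (1 / real m) \<le> 3 / (2 * (2 * real m + 1)) * real m"
      by (intro mult_left_mono) auto
    then show ?thesis by (simp add: algebra_simps)
  qed
  finally show ?thesis by (simp add: aa_def mult.commute)
qed

lemma maj_Ar: "m \<ge> 1 \<Longrightarrow> maj (Ar m) (tc (aa m) * Geo ^ 3)"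
  using bb_le[of m] aa_bounds(1)[of m] by (simp add: maj_def Ar_def Geo_pow)

lemma Qr_bound: assumes "i < 3" shows "\<bar>cp i (Qr N)\<bar> \<le> (1/4)^N * (3 * real N + 1)^2"
proof -
  have "maj (Qr N) (\<Prod>m\<in>{1..N}. tc (aa m) * Geo ^ 3)"
    unfolding Qr_def by (intro maj_prod maj_Ar) auto
  also have "(\<Prod>m\<in>{1..N}. tc (aa m) * Geo ^ 3) = tc (\<Prod>m\<in>{1..N}. aa m) * Geo ^ (3 * N)"
    by (simp add: prod.distrib tc_prod power_mult[symmetric] mult.commute)
  finally have m: "maj (Qr N) (tc (\<Prod>m\<in>{1..N}. aa m) * Geo ^ (3 * N))" .
  have p0: "(\<Prod>m\<in>{1..N}. aa m) \<ge> 0" by (intro prod_nonneg) (simp add: aa_bounds)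
  have p1: "(\<Prod>m\<in>{1..N}. aa m) \<le> (1/4)^N"
  proof -
    have "(\<Prod>m\<in>{1..N}. aa m) \<le> (\<Prod>m\<in>{1..N}. 1/4)"
      by (intro prod_mono conjI aa_bounds)
    then show ?thesis by simp
  qed
  have "\<bar>cp i (Qr N)\<bar> \<le> (\<Prod>m\<in>{1..N}. aa m) * (real (3 * N) + 1)^2"
    by (rule maj_bound[OF m assms p0])
  also have "\<dots> = (\<Prod>m\<in>{1..N}. aa m) * (3 * real N + 1)^2" by simp
  also have "\<dots> \<le> (1/4)^N * (3 * real N + 1)^2"
    using p1 by (intro mult_right_mono) auto
  finally show ?thesis .
qed

lemma summable_inv_pow: "p \<ge> 2 \<Longrightarrow> summable (\<lambda>t. 1 / real (Suc t) ^ p)"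
proof -
  assume p: "p \<ge> 2"
  have "summable (\<lambda>t. inverse (real t ^ p))" by (rule inverse_power_summable[OF p])
  then have "summable (\<lambda>t. inverse (real (Suc t) ^ p))" by (subst summable_Suc_iff)
  then show ?thesis by (simp add: inverse_eq_divide)
qed

definition zz :: "nat \<Rightarrow> real" where "zz i = (\<Sum>t. 1 / real (Suc t) ^ (2 * i + 2))"

lemma zz_zeta0: "zz 0 = zeta 2"
  unfolding zz_def zeta_def
proof (intro arg_cong[where f=suminf] ext)
  fix t :: nat
  have "real (Suc t) powr (2::real) = real (Suc t) ^ 2" by (rule powr_numeral) simp
  then show "1 / real (Suc t) ^ (2 * 0 + 2) = 1 / real (Suc t) powr 2" by (simp add: power2_eq_square)
qed

lemma zz_zeta1: "zz 1 = zeta 4"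
  unfolding zz_def zeta_def
proof (intro arg_cong[where f=suminf] ext)
  fix t :: nat
  have "real (Suc t) powr (4::real) = real (Suc t) ^ 4" by (rule powr_numeral) simp
  then show "1 / real (Suc t) ^ (2 * 1 + 2) = 1 / real (Suc t) powr 4" by simp
qed

lemma zz_zeta2: "zz 2 = zeta 6"
  unfolding zz_def zeta_def
proof (intro arg_cong[where f=suminf] ext)
  fix t :: nat
  have "real (Suc t) powr (6::real) = real (Suc t) ^ 6" by (rule powr_numeral) simp
  then show "1 / real (Suc t) ^ (2 * 2 + 2) = 1 / real (Suc t) powr 6" by simp
qed

lemmas zz_zeta = zz_zeta0 zz_zeta1 zz_zeta2

lemma cpF1: "i < 3 \<Longrightarrow> cp i (F 1 (Suc t)) = 1 / real (Suc t) ^ (2 * i + 2)"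
proof -
  assume "i < 3"
  then have "i = 0 \<or> i = 1 \<or> i = 2" by auto
  moreover have "F 1 (Suc t) = E (real (Suc t))"
    by (simp add: F_def cc_def cen_def A_def B_def tc_one)
  ultimately show ?thesis by (auto simp: cp_def E_def eval_nat_numeral)
qed

lemma SF1_lim: "i < 3 \<Longrightarrow> (\<lambda>K. cp i (SF 1 K)) \<longlonglongrightarrow> zz i"
proof -
  assume i: "i < 3"
  have "(\<lambda>K. \<Sum>t<K. 1 / real (Suc t) ^ (2 * i + 2)) \<longlonglongrightarrow> zz i"
    unfolding zz_def by (rule summable_LIMSEQ) (rule summable_inv_pow, simp)
  moreover have "\<And>K. cp i (SF 1 K) = (\<Sum>t<K. 1 / real (Suc t) ^ (2 * i + 2))"
    unfolding SF_def cp_sum using cpF1[OF i] by (intro sum.cong) auto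
  ultimately show ?thesis by simp
qed

definition Cz :: real where "Cz = (\<Sum>t. 1 / real (Suc t) ^ 2)"

lemma F_summable: assumes "n \<ge> 1" "i < 3"
  shows "summable (\<lambda>t. \<bar>cp i (F n (Suc t))\<bar>)" "summable (\<lambda>t. cp i (F n (Suc t)))"
    "\<bar>\<Sum>t. cp i (F n (Suc t))\<bar> \<le> hb n * Cz"
proof -
  have g: "summable (\<lambda>t. hb n * (1 / real (Suc t) ^ 2))"
    by (intro summable_mult summable_inv_pow) simp
  have b: "\<And>t. \<bar>cp i (F n (Suc t))\<bar> \<le> hb n * (1 / real (Suc t) ^ 2)"
  proof -
    fix t
    show "\<bar>cp i (F n (Suc t))\<bar> \<le> hb n * (1 / real (Suc t) ^ 2)"
      using Fbound[of n "Suc t" i] assms by simp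
  qed
  show s1: "summable (\<lambda>t. \<bar>cp i (F n (Suc t))\<bar>)"
    by (rule summable_comparison_test[OF _ g]) (use b in auto)
  show "summable (\<lambda>t. cp i (F n (Suc t)))"
    by (rule summable_comparison_test[OF _ g]) (use b in auto)
  have "\<bar>\<Sum>t. cp i (F n (Suc t))\<bar> \<le> (\<Sum>t. \<bar>cp i (F n (Suc t))\<bar>)"
    using summable_norm[of "\<lambda>t. cp i (F n (Suc t))"] s1 by simp
  also have "\<dots> \<le> (\<Sum>t. hb n * (1 / real (Suc t) ^ 2))"
    by (rule suminf_le[OF b s1 g])
  also have "\<dots> = hb n * Cz" unfolding Cz_def
    using suminf_mult[OF summable_inv_pow[of 2], of "hb n"] by simp
  finally show "\<bar>\<Sum>t. cp i (F n (Suc t))\<bar> \<le> hb n * Cz" .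
qed

lemma G_lim: assumes n: "n \<ge> 1" and i: "i < 3"
  shows "(\<lambda>K. cp i (G n (Suc K))) \<longlonglongrightarrow> 0"
proof (rule Lim_null_comparison)
  have lim: "(\<lambda>K. hb n * ((2 * real K + 2 + 3 * real n) / (real K + 1) ^ 2)) \<longlonglongrightarrow> 0"
    by (intro tendsto_mult_right_zero) real_asymp
  show "(\<lambda>K. hb n * ((2 * real K + 2 + 3 * real n) / (real K + 1) ^ 2)) \<longlonglongrightarrow> 0" by (rule lim)
  show "\<forall>\<^sub>F K in sequentially. norm (cp i (G n (Suc K))) \<le> hb n * ((2 * real K + 2 + 3 * real n) / (real K + 1) ^ 2)"
  proof (intro always_eventually allI)
    fix K
    have gf: "\<bar>gf n (Suc K)\<bar> \<le> 2 * real K + 2 + 3 * real n"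
    proof -
      have "gf n (Suc K) = - ((2 * real (Suc K) + 3 * real n - 2) / (2 * (2 * real n - 1)))"
        by (simp only: gf_def divide_minus_left)
      moreover have "(2 * real (Suc K) + 3 * real n - 2) / (2 * (2 * real n - 1)) \<ge> 0"
        using n by (intro divide_nonneg_pos) auto
      ultimately have "\<bar>gf n (Suc K)\<bar> = (2 * real (Suc K) + 3 * real n - 2) / (2 * (2 * real n - 1))"
        by (metis abs_minus_cancel abs_of_nonneg)
      also have "\<dots> \<le> (2 * real (Suc K) + 3 * real n - 2) / 1"
        using n by (intro divide_left_mono) auto
      finally show ?thesis by simp
    qed
    have cpG: "cp i (G n (Suc K)) = gf n (Suc K) * cp i (F n (Suc K))"
      by (simp add: G_def cp_tc)
    have "\<bar>cp i (G n (Suc K))\<bar> \<le> (2 * real K + 2 + 3 * real n) * (hb n / real (Suc K) ^ 2)"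
      unfolding cpG abs_mult by (rule mult_mono[OF gf Fbound[OF n _ i]]) auto
    then show "norm (cp i (G n (Suc K))) \<le> hb n * ((2 * real K + 2 + 3 * real n) / (real K + 1) ^ 2)"
      by (simp add: field_simps)
  qed
qed

lemma Wr_formula: assumes i: "i < 3"
  shows "cp i (Wr N) = zz i - (\<Sum>t. cp i (F (Suc N) (Suc t)))"
proof -
  have eq: "\<And>K. cp i (Wr N) = cp i (SF 1 K) - cp i (SF (Suc N) K) - (\<Sum>j<N. cp i (G (Suc j) (Suc K)))"
    using arg_cong[OF main_identity, of "cp i"] by (simp add: cp_diff cp_add cp_sum)
  have l: "(\<lambda>K. cp i (SF 1 K) - cp i (SF (Suc N) K) - (\<Sum>j<N. cp i (G (Suc j) (Suc K))))
     \<longlonglongrightarrow> zz i - (\<Sum>t. cp i (F (Suc N) (Suc t))) - (\<Sum>j<N. 0)"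
  proof (intro tendsto_diff tendsto_sum)
    show "(\<lambda>K. cp i (SF 1 K)) \<longlonglongrightarrow> zz i" by (rule SF1_lim[OF i])
    show "(\<lambda>K. cp i (SF (Suc N) K)) \<longlonglongrightarrow> (\<Sum>t. cp i (F (Suc N) (Suc t)))"
      unfolding SF_def cp_sum by (rule summable_LIMSEQ) (rule F_summable(2)[OF _ i], simp)
    fix j show "(\<lambda>K. cp i (G (Suc j) (Suc K))) \<longlonglongrightarrow> 0" by (rule G_lim[OF _ i]) simp
  qed
  have "(\<lambda>K. cp i (Wr N)) \<longlonglongrightarrow> zz i - (\<Sum>t. cp i (F (Suc N) (Suc t))) - (\<Sum>j<N. 0)"
    using l by (simp only: eq[symmetric])
  then have "cp i (Wr N) = zz i - (\<Sum>t. cp i (F (Suc N) (Suc t))) - (\<Sum>j<N. 0)"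
    using LIMSEQ_const_iff by blast
  then show ?thesis by simp
qed

lemma hb_lim: "(\<lambda>N. hb (Suc N)) \<longlonglongrightarrow> 0"
proof (rule Lim_null_comparison)
  show "(\<lambda>N. 2 * real N * (5 * real N + 6)^2 / 4 ^ N) \<longlonglongrightarrow> 0" by real_asymp
  show "\<forall>\<^sub>F N in sequentially. norm (hb (Suc N)) \<le> 2 * real N * (5 * real N + 6)^2 / 4 ^ N"
  proof (rule eventually_mono[OF eventually_gt_at_top[of 0]])
    fix N :: nat assume N: "N > 0"
    have lb: "4 ^ N / (2 * real N) \<le> cen N" unfolding cen_def by (rule central_binomial_lower_bound[OF N])
    have pos: "4 ^ N / (2 * real N) > 0" using N by simp
    have pos2: "0 < cen N * 4 ^ N / (2 * real N)" using N cen_pos[of N] by simp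
    have "hb (Suc N) = (5 * real N + 6)^2 / cen N"
      by (simp add: hb_def cc_def algebra_simps)
    also have "\<dots> \<le> (5 * real N + 6)^2 / (4 ^ N / (2 * real N))"
      by (rule divide_left_mono[OF lb]) (use pos pos2 in auto)
    also have "\<dots> = 2 * real N * (5 * real N + 6)^2 / 4 ^ N"
      using N by (simp add: field_simps)
    finally show "norm (hb (Suc N)) \<le> 2 * real N * (5 * real N + 6)^2 / 4 ^ N"
      using cc_pos[of "Suc N"] by (simp add: hb_def)
  qed
qed

lemma Wr_lim: assumes i: "i < 3" shows "(\<lambda>N. cp i (Wr N)) \<longlonglongrightarrow> zz i"
proof -
  have t: "(\<lambda>N. \<Sum>t. cp i (F (Suc N) (Suc t))) \<longlonglongrightarrow> 0"
  proof (rule Lim_null_comparison)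
    show "(\<lambda>N. hb (Suc N) * Cz) \<longlonglongrightarrow> 0" using tendsto_mult_left_zero[OF hb_lim] by simp
    show "\<forall>\<^sub>F N in sequentially. norm (\<Sum>t. cp i (F (Suc N) (Suc t))) \<le> hb (Suc N) * Cz"
      using F_summable(3)[OF _ i] by (intro always_eventually allI) simp
  qed
  have "(\<lambda>N. zz i - (\<Sum>t. cp i (F (Suc N) (Suc t)))) \<longlonglongrightarrow> zz i - 0"
    by (intro tendsto_diff tendsto_const t)
  then show ?thesis by (simp add: Wr_formula[OF i])
qed

lemma Qr_lim: assumes i: "i < 3" shows "(\<lambda>N. cp i (Qr N)) \<longlonglongrightarrow> 0"
proof (rule Lim_null_comparison)
  show "(\<lambda>N. (1/4)^N * (3 * real N + 1)^2) \<longlonglongrightarrow> 0" by real_asymp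
  show "\<forall>\<^sub>F N in sequentially. norm (cp i (Qr N)) \<le> (1/4)^N * (3 * real N + 1)^2"
    using Qr_bound[OF i] by (intro always_eventually allI) simp
qed

theorem mainTheorem4:
  shows "Mprod \<longlonglongrightarrow>
           mat4 [[0, 0, 0, zeta 6],
                 [0, 0, 0, zeta 4],
                 [0, 0, 0, zeta 2],
                 [0, 0, 0, 1]]"
proof -
  have t: "mat4 [[0, 0, 0, zeta 6], [0, 0, 0, zeta 4], [0, 0, 0, zeta 2], [0, 0, 0, 1]]
     = tmat 0 (T (zeta 2) (zeta 4) (zeta 6))"
    by (simp add: tmat_def)
  have "(\<lambda>N. tmat (Qr N) (Wr N)) \<longlonglongrightarrow> tmat 0 (T (zeta 2) (zeta 4) (zeta 6))"
    using Qr_lim[of 0] Qr_lim[of 1] Qr_lim[of 2] Wr_lim[of 0] Wr_lim[of 1] Wr_lim[of 2]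
    by (intro tmat_tendsto) (simp_all add: cp_def zz_zeta zz_zeta(2)[simplified])
  then show ?thesis unfolding t Mprod_tmat[abs_def] .
qed

end
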